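(* Let $U\subset\mathbb{R}^n$ be a domain with $\mathbb{R}^{>0}\cdot U\subset U$ and $h:U\to\mathbb{R}$ a smooth positive function, homogeneous of degree $k>1$, such that $-\partial^2h$ restricts to a positive definite metric on $\{h=1\}$. Assume that the Riemannian metric $g'=-\partial^2\log h$ on $U$ is complete, and let $c<0$. Then the Riemannian metric $g'_c=-\partial^2\log(h+c)$ on $U_c=\{x\in U\mid h(x)+c>0\}$ is complete.
   Context: $\partial^2$ denotes the real Hessian with respect to the standard linear coordinates of $\mathbb{R}^n$. (That $g'$ and $g'_c$ are Riemannian on $U$ and $U_c$ respectively is known in this setting.) *)

theory Defs
  imports "HOL-Analysis.Analysis"
begin

fun Ck_on :: "nat \<Rightarrow> ('a::euclidean_space \<Rightarrow> real) \<Rightarrow> 'a set \<Rightarrow> bool" where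
  "Ck_on 0 f S = continuous_on S f"
| "Ck_on (Suc m) f S =
     (f differentiable_on S \<and> continuous_on S f \<and>
      (\<forall>v. Ck_on m (\<lambda>x. frechet_derivative f (at x) v) S))"

definition smooth_on :: "('a::euclidean_space \<Rightarrow> real) \<Rightarrow> 'a set \<Rightarrow> bool" where
  "smooth_on f S \<longleftrightarrow> (\<forall>m. Ck_on m f S)"

definition hess :: "('a::euclidean_space \<Rightarrow> real) \<Rightarrow> 'a \<Rightarrow> 'a \<Rightarrow> 'a \<Rightarrow> real" where
  "hess f x v w = frechet_derivative (\<lambda>y. frechet_derivative f (at y) v) (at x) w"

definition curve_length :: "('a::euclidean_space \<Rightarrow> 'a \<Rightarrow> 'a \<Rightarrow> real) \<Rightarrow> (real \<Rightarrow> 'a) \<Rightarrow> real" where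
  "curve_length G \<gamma> =
     integral {0..1} (\<lambda>t. sqrt (G (\<gamma> t) (vector_derivative \<gamma> (at t)) (vector_derivative \<gamma> (at t))))"

text \<open>Riemannian distance on U (extended real, infinite if x and y cannot be joined): infimum of lengths of C^1 curves in U joining x and y.\<close>
definition riem_dist :: "'a::euclidean_space set \<Rightarrow> ('a \<Rightarrow> 'a \<Rightarrow> 'a \<Rightarrow> real) \<Rightarrow> 'a \<Rightarrow> 'a \<Rightarrow> ereal" where
  "riem_dist U G x y = Inf {ereal (curve_length G \<gamma>) | \<gamma>.
      \<gamma> C1_differentiable_on {0..1} \<and> \<gamma> ` {0..1} \<subseteq> U \<and> \<gamma> 0 = x \<and> \<gamma> 1 = y}"

definition riem_complete :: "'a::euclidean_space set \<Rightarrow> ('a \<Rightarrow> 'a \<Rightarrow> 'a \<Rightarrow> real) \<Rightarrow> bool" where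
  "riem_complete U G \<longleftrightarrow>
     (\<forall>X::nat \<Rightarrow> 'a. (\<forall>m. X m \<in> U) \<and>
        (\<forall>e>0. \<exists>N. \<forall>m\<ge>N. \<forall>p\<ge>N. riem_dist U G (X m) (X p) < ereal e)
        \<longrightarrow> (\<exists>y\<in>U. (\<lambda>m. riem_dist U G (X m) y) \<longlonglongrightarrow> 0))"

end

theory Submission
  imports Defs
begin


lemma lin_expand:
  fixes f :: "'a::euclidean_space \<Rightarrow> real"
  assumes "linear f" shows "f x = (\<Sum>b\<in>Basis. (x \<bullet> b) * f b)"
proof -
  have "f x = f (\<Sum>b\<in>Basis. (x \<bullet> b) *\<^sub>R b)" by (simp add: euclidean_representation)
  also have "\<dots> = (\<Sum>b\<in>Basis. (x \<bullet> b) * f b)" using assms by (simp add: linear_sum linear_scale)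
  finally show ?thesis .
qed

locale hsetup =
  fixes U :: "'a::euclidean_space set" and h :: "'a \<Rightarrow> real" and k :: real
  assumes U_open: "open U"
    and U_cone: "\<And>t x. t > 0 \<Longrightarrow> x \<in> U \<Longrightarrow> t *\<^sub>R x \<in> U"
    and h_smooth: "smooth_on h U"
    and h_pos: "\<And>x. x \<in> U \<Longrightarrow> h x > 0"
    and k_gt: "k > 1"
    and h_hom: "\<And>t x. t > 0 \<Longrightarrow> x \<in> U \<Longrightarrow> h (t *\<^sub>R x) = t powr k * h x"
    and h_def: "\<And>x v. x \<in> U \<Longrightarrow> h x = 1 \<Longrightarrow> v \<noteq> 0 \<Longrightarrow>
                   frechet_derivative h (at x) v = 0 \<Longrightarrow> - hess h x v v > 0"
begin

abbreviation "Dh x \<equiv> frechet_derivative h (at x)"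

lemma C2: "h differentiable_on U" "continuous_on U h"
  "\<And>v. (\<lambda>x. Dh x v) differentiable_on U" "\<And>v. continuous_on U (\<lambda>x. Dh x v)"
  "\<And>v w. continuous_on U (\<lambda>x. hess h x v w)"
proof -
  have "Ck_on 2 h U" using h_smooth smooth_on_def by blast
  then show "h differentiable_on U" "continuous_on U h"
  "\<And>v. (\<lambda>x. Dh x v) differentiable_on U" "\<And>v. continuous_on U (\<lambda>x. Dh x v)"
  "\<And>v w. continuous_on U (\<lambda>x. hess h x v w)"
    by (simp_all add: numeral_2_eq_2 hess_def)
qed

lemma h_deriv: "x \<in> U \<Longrightarrow> (h has_derivative Dh x) (at x)"
  using C2(1) U_open differentiable_on_eq_differentiable_at frechet_derivative_works by blast

lemma hess_fun: "hess h x v = frechet_derivative (\<lambda>y. Dh y v) (at x)"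
  by (rule ext) (simp add: hess_def)

lemma g_deriv: "x \<in> U \<Longrightarrow> ((\<lambda>y. Dh y v) has_derivative hess h x v) (at x)"
  unfolding hess_fun
  using C2(3) U_open differentiable_on_eq_differentiable_at frechet_derivative_works by blast

lemma Dh_lin: "x \<in> U \<Longrightarrow> linear (Dh x)"
  using h_deriv has_derivative_linear by blast

lemma hess_lin2: "x \<in> U \<Longrightarrow> linear (hess h x v)"
  using g_deriv has_derivative_linear by blast

lemma hess_lin1: assumes x: "x \<in> U"
  shows "hess h x (a *\<^sub>R v + w) u = a * hess h x v u + hess h x w u"
proof -
  have "((\<lambda>y. Dh y (a *\<^sub>R v + w)) has_derivative (\<lambda>u. a * hess h x v u + hess h x w u)) (at x)"
  proof (rule has_derivative_transform_within_open[of "\<lambda>y. a * Dh y v + Dh y w" _ x UNIV U])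
    show "((\<lambda>y. a * Dh y v + Dh y w) has_derivative (\<lambda>u. a * hess h x v u + hess h x w u)) (at x)"
      using x by (auto intro!: derivative_eq_intros g_deriv)
  qed (use x U_open in \<open>auto simp: linear_add linear_scale Dh_lin\<close>)
  from fun_cong[OF frechet_derivative_at[OF this], of u] show ?thesis by (simp add: hess_def)
qed

lemma hess_lin1': "x \<in> U \<Longrightarrow> linear (\<lambda>v. hess h x v u)"
proof (rule linearI)
  assume x: "x \<in> U"
  fix v w :: 'a and r :: real
  show "hess h x (v + w) u = hess h x v u + hess h x w u" using hess_lin1[OF x, of 1 v w u] by simp
  have "hess h x 0 u = 0" using hess_lin1[OF x, of 1 0 0 u] by simp
  then show "hess h x (r *\<^sub>R v) u = r *\<^sub>R hess h x v u" using hess_lin1[OF x, of r v 0 u] by simp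
qed

lemma Dh_expand: "x \<in> U \<Longrightarrow> Dh x v = (\<Sum>i\<in>Basis. (v \<bullet> i) * Dh x i)"
  using Dh_lin lin_expand by blast

lemma hess_expand: assumes "x \<in> U"
  shows "hess h x v w = (\<Sum>i\<in>Basis. \<Sum>j\<in>Basis. (v \<bullet> i) * (w \<bullet> j) * hess h x i j)"
proof -
  have "hess h x v w = (\<Sum>i\<in>Basis. (v \<bullet> i) * hess h x i w)"
    using lin_expand[OF hess_lin1'[OF assms]] by blast
  also have "\<dots> = (\<Sum>i\<in>Basis. (v \<bullet> i) * (\<Sum>j\<in>Basis. (w \<bullet> j) * hess h x i j))"
    using lin_expand[OF hess_lin2[OF assms]] by metis
  finally show ?thesis by (simp add: sum_distrib_left mult.assoc)
qed

end

lemma deriv_eq_open: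
  fixes f g :: "real \<Rightarrow> real"
  assumes "(f has_real_derivative a) (at t)" "(g has_real_derivative b) (at t)"
    "open S" "t \<in> S" "\<And>x. x \<in> S \<Longrightarrow> f x = g x"
  shows "a = b"
proof -
  have "(f has_real_derivative b) (at t)"
    using has_derivative_transform_within_open[of g "(*) b" t UNIV S f] assms
    by (auto simp: has_field_derivative_def)
  then show ?thesis using assms(1) DERIV_unique by blast
qed

context hsetup begin

lemma H1: assumes x: "x \<in> U" shows "Dh x x = k * h x"
proof -
  have "((\<lambda>t. h (t *\<^sub>R x)) has_derivative (\<lambda>s. Dh x (s *\<^sub>R x))) (at 1)"
  proof -
    have "((\<lambda>t. t *\<^sub>R x) has_derivative (\<lambda>s. s *\<^sub>R x)) (at 1)" by (auto intro!: derivative_eq_intros)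
    from has_derivative_compose[OF this, of h "Dh x"] show ?thesis using h_deriv[OF x] by simp
  qed
  then have "((\<lambda>t. h (t *\<^sub>R x)) has_derivative (\<lambda>s. s * Dh x x)) (at 1)"
    using linear_scale[OF Dh_lin[OF x]] by simp
  moreover have "(*) (Dh x x) = (\<lambda>s. s * Dh x x)" by (rule ext) simp
  ultimately have d1: "((\<lambda>t. h (t *\<^sub>R x)) has_real_derivative Dh x x) (at 1)"
    unfolding has_field_derivative_def by simp
  have d2: "((\<lambda>t. t powr k * h x) has_real_derivative k * h x) (at 1)"
    by (auto intro!: derivative_eq_intros)
  show ?thesis
    by (rule deriv_eq_open[OF d1 d2, of "{0<..}"]) (auto simp: h_hom x)
qed

lemma H2: assumes t: "t > 0" and x: "x \<in> U" shows "Dh (t *\<^sub>R x) v = t powr (k-1) * Dh x v"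
proof -
  have tx: "t *\<^sub>R x \<in> U" using U_cone t x by blast
  have d1: "((\<lambda>y. h (t *\<^sub>R y)) has_derivative (\<lambda>w. Dh (t *\<^sub>R x) (t *\<^sub>R w))) (at x)"
  proof -
    have "((\<lambda>y. t *\<^sub>R y) has_derivative (\<lambda>w. t *\<^sub>R w)) (at x)" by (auto intro!: derivative_eq_intros)
    from has_derivative_compose[OF this, of h "Dh (t *\<^sub>R x)"] show ?thesis using h_deriv[OF tx] by simp
  qed
  have d2: "((\<lambda>y. h (t *\<^sub>R y)) has_derivative (\<lambda>w. t powr k * Dh x w)) (at x)"
  proof (rule has_derivative_transform_within_open[of "\<lambda>y. t powr k * h y" _ x UNIV U])
    show "((\<lambda>y. t powr k * h y) has_derivative (\<lambda>w. t powr k * Dh x w)) (at x)"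
      using h_deriv[OF x] by (auto intro!: derivative_eq_intros)
  qed (use x U_open h_hom t in auto)
  have "Dh (t *\<^sub>R x) (t *\<^sub>R v) = t powr k * Dh x v"
    using fun_cong[OF has_derivative_unique[OF d1 d2], of v] by simp
  then have "t * Dh (t *\<^sub>R x) v = t powr k * Dh x v"
    using linear_scale[OF Dh_lin[OF tx]] by simp
  moreover have "t powr k = t * t powr (k-1)" using t by (simp add: powr_diff)
  ultimately show ?thesis using t by simp
qed

lemma H3: assumes x: "x \<in> U" shows "hess h x v x = (k-1) * Dh x v"
proof -
  have "((\<lambda>t. Dh (t *\<^sub>R x) v) has_derivative (\<lambda>s. hess h x v (s *\<^sub>R x))) (at 1)"
  proof -
    have "((\<lambda>t. t *\<^sub>R x) has_derivative (\<lambda>s. s *\<^sub>R x)) (at 1)" by (auto intro!: derivative_eq_intros)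
    from has_derivative_compose[OF this, of "\<lambda>y. Dh y v" "hess h x v"] show ?thesis using g_deriv[OF x] by simp
  qed
  then have "((\<lambda>t. Dh (t *\<^sub>R x) v) has_derivative (\<lambda>s. s * hess h x v x)) (at 1)"
    using linear_scale[OF hess_lin2[OF x]] by simp
  moreover have "(*) (hess h x v x) = (\<lambda>s. s * hess h x v x)" by (rule ext) simp
  ultimately have d1: "((\<lambda>t. Dh (t *\<^sub>R x) v) has_real_derivative hess h x v x) (at 1)"
    unfolding has_field_derivative_def by simp
  have d2: "((\<lambda>t. t powr (k-1) * Dh x v) has_real_derivative (k-1) * Dh x v) (at 1)"
    by (auto intro!: derivative_eq_intros)
  show ?thesis
    by (rule deriv_eq_open[OF d1 d2, of "{0<..}"]) (auto simp: H2 x)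
qed

lemma H5: assumes t: "t > 0" and x: "x \<in> U" shows "hess h (t *\<^sub>R x) v w = t powr (k-2) * hess h x v w"
proof -
  have tx: "t *\<^sub>R x \<in> U" using U_cone t x by blast
  have d1: "((\<lambda>y. Dh (t *\<^sub>R y) v) has_derivative (\<lambda>w. hess h (t *\<^sub>R x) v (t *\<^sub>R w))) (at x)"
  proof -
    have "((\<lambda>y. t *\<^sub>R y) has_derivative (\<lambda>w. t *\<^sub>R w)) (at x)" by (auto intro!: derivative_eq_intros)
    from has_derivative_compose[OF this, of "\<lambda>y. Dh y v" "hess h (t *\<^sub>R x) v"] show ?thesis using g_deriv[OF tx] by simp
  qed
  have d2: "((\<lambda>y. Dh (t *\<^sub>R y) v) has_derivative (\<lambda>w. t powr (k-1) * hess h x v w)) (at x)"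
  proof (rule has_derivative_transform_within_open[of "\<lambda>y. t powr (k-1) * Dh y v" _ x UNIV U])
    show "((\<lambda>y. t powr (k-1) * Dh y v) has_derivative (\<lambda>w. t powr (k-1) * hess h x v w)) (at x)"
      using g_deriv[OF x] by (auto intro!: derivative_eq_intros)
  qed (use x U_open H2 t in auto)
  have "hess h (t *\<^sub>R x) v (t *\<^sub>R w) = t powr (k-1) * hess h x v w"
    using fun_cong[OF has_derivative_unique[OF d1 d2], of w] by simp
  then have "t * hess h (t *\<^sub>R x) v w = t powr (k-1) * hess h x v w"
    using linear_scale[OF hess_lin2[OF tx]] by simp
  moreover have "t powr (k-1) = t * t powr (k-2)" using t powr_add[of t 1 "k-2"] by simp
  ultimately show ?thesis using t by simp
qed

lemma H4: assumes x: "x \<in> U" shows "hess h x x w = (k-1) * Dh x w"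
proof -
  have d1: "((\<lambda>y. \<Sum>b\<in>Basis. (y \<bullet> b) * Dh y b) has_derivative
     (\<lambda>w. \<Sum>b\<in>Basis. (x \<bullet> b) * hess h x b w + (w \<bullet> b) * Dh x b)) (at x)"
    using x by (auto intro!: derivative_eq_intros g_deriv)
  have d2: "((\<lambda>y. \<Sum>b\<in>Basis. (y \<bullet> b) * Dh y b) has_derivative (\<lambda>w. k * Dh x w)) (at x)"
  proof (rule has_derivative_transform_within_open[of "\<lambda>y. k * h y" _ x UNIV U])
    show "((\<lambda>y. k * h y) has_derivative (\<lambda>w. k * Dh x w)) (at x)"
      using h_deriv[OF x] by (auto intro!: derivative_eq_intros)
  qed (use x U_open in \<open>auto simp: H1 Dh_expand[symmetric]\<close>)
  have "(\<Sum>b\<in>Basis. (x \<bullet> b) * hess h x b w + (w \<bullet> b) * Dh x b) = k * Dh x w"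
    using fun_cong[OF has_derivative_unique[OF d1 d2], of w] by simp
  moreover have "(\<Sum>b\<in>Basis. (x \<bullet> b) * hess h x b w + (w \<bullet> b) * Dh x b) = hess h x x w + Dh x w"
    using lin_expand[OF hess_lin1'[OF x], of x w] Dh_expand[OF x, of w]
    by (simp add: sum.distrib)
  ultimately show ?thesis by (simp add: algebra_simps)
qed

end


context hsetup begin

lemma K1: assumes x: "x \<in> U" and hx: "h x = 1"
  shows "k * (- hess h x v v) + (k-1) * (Dh x v)^2 \<ge> 0"
proof -
  define a where "a = Dh x v / k"
  define \<tau> where "\<tau> = v - a *\<^sub>R x"
  have k0: "k > 0" using k_gt by simp
  have v: "v = a *\<^sub>R x + \<tau>" by (simp add: \<tau>_def)
  have Dt: "Dh x \<tau> = 0"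
    using H1[OF x] hx k0 by (simp add: \<tau>_def a_def linear_diff[OF Dh_lin[OF x]] linear_scale[OF Dh_lin[OF x]])
  have ht: "hess h x \<tau> x = 0" using H3[OF x] Dt by simp
  have e1: "hess h x v v = a * hess h x x v + hess h x \<tau> v"
    using hess_lin1[OF x, of a x \<tau> v] v by simp
  have "hess h x \<tau> (a *\<^sub>R x + \<tau>) = a * hess h x \<tau> x + hess h x \<tau> \<tau>"
    by (simp add: linear_add[OF hess_lin2[OF x, of \<tau>]] linear_scale[OF hess_lin2[OF x, of \<tau>]])
  then have e2: "hess h x \<tau> v = a * hess h x \<tau> x + hess h x \<tau> \<tau>"
    by (simp add: v[symmetric])
  have tt: "- hess h x \<tau> \<tau> \<ge> 0"
  proof (cases "\<tau> = 0")
    case True then show ?thesis using linear_0[OF hess_lin2[OF x, of 0]] by simp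
  next
    case False then show ?thesis using h_def[OF x hx False Dt] by simp
  qed
  have "hess h x v v = (k-1) * (Dh x v)^2 / k + hess h x \<tau> \<tau>"
    using e1 e2 ht H4[OF x, of v] by (simp add: a_def power2_eq_square)
  then have "k * (- hess h x v v) + (k-1) * (Dh x v)^2 = k * (- hess h x \<tau> \<tau>)"
    using k0 by (simp add: field_simps)
  then show ?thesis using tt k0 by (simp add: mult_pos_neg mult_nonneg_nonpos)
qed

lemma K: assumes x: "x \<in> U"
  shows "k * h x * (- hess h x v v) + (k-1) * (Dh x v)^2 \<ge> 0"
proof -
  define H where "H = h x"
  have H0: "H > 0" using h_pos x H_def by simp
  define s where "s = H powr (1/k)"
  have s0: "s > 0" using H0 s_def by simp
  have sk: "s powr k = H" using H0 k_gt by (simp add: s_def powr_powr)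
  define x1 where "x1 = (1/s) *\<^sub>R x"
  have x1: "x1 \<in> U" using U_cone s0 x x1_def by simp
  have xx: "x = s *\<^sub>R x1" using s0 by (simp add: x1_def)
  have hx1: "h x1 = 1"
  proof -
    have "H = s powr k * h x1" using h_hom[OF s0 x1] xx H_def by simp
    then show ?thesis using sk H0 by simp
  qed
  have A: "k * (- hess h x1 v v) + (k-1) * (Dh x1 v)^2 \<ge> 0" using K1[OF x1 hx1] .
  have hv: "hess h x v v = s powr (k-2) * hess h x1 v v" using H5[OF s0 x1] xx by simp
  have dv: "Dh x v = s powr (k-1) * Dh x1 v" using H2[OF s0 x1] xx by simp
  have p1: "s powr k * s powr (k-2) = s powr (2*k-2)" by (simp add: powr_add[symmetric])
  have p2: "(s powr (k-1))^2 = s powr (2*k-2)"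
    by (simp add: power2_eq_square powr_add[symmetric])
  have "k * h x * (- hess h x v v) + (k-1) * (Dh x v)^2
     = s powr (2*k-2) * (k * (- hess h x1 v v) + (k-1) * (Dh x1 v)^2)"
  proof -
    have "k * h x * (- hess h x v v) + (k-1) * (Dh x v)^2
      = k * (s powr k * s powr (k-2)) * (- hess h x1 v v) + (k-1) * ((s powr (k-1))^2 * (Dh x1 v)^2)"
      unfolding hv dv H_def[symmetric] sk[symmetric] power_mult_distrib by (simp only: mult_ac)
    also have "\<dots> = s powr (2*k-2) * (k * (- hess h x1 v v) + (k-1) * (Dh x1 v)^2)"
      unfolding p1 p2 by (simp only: algebra_simps)
    finally show ?thesis .
  qed
  also have "\<dots> \<ge> 0" using A s0 by simp
  finally show ?thesis .
qed

end

context hsetup begin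
lemma S_open: "open {y\<in>U. h y + c > 0}"
proof -
  have "open (h -` {-c<..} \<inter> U)"
    using continuous_on_open_vimage[OF U_open, of h] C2(2) open_greaterThan[of "-c"] by simp
  moreover have "h -` {-c<..} \<inter> U = {y\<in>U. h y + c > 0}" by auto
  ultimately show ?thesis by simp
qed

lemma F_deriv: assumes "x \<in> U" "h x + c > 0"
  shows "((\<lambda>y. ln (h y + c)) has_derivative (\<lambda>v. Dh x v / (h x + c))) (at x)"
proof -
  have "((\<lambda>y. ln (h y + c)) has_derivative (\<lambda>v. inverse (h x + c) * Dh x v)) (at x)"
    using assms h_deriv[OF assms(1)] by (auto intro!: derivative_eq_intros)
  then show ?thesis by (simp add: divide_inverse mult.commute)
qed

lemma hess_log: assumes x: "x \<in> U" and hx: "h x + c > 0"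
  shows "hess (\<lambda>y. ln (h y + c)) x v w = hess h x v w / (h x + c) - Dh x v * Dh x w / (h x + c)^2"
proof -
  let ?F = "\<lambda>y. ln (h y + c)"
  have hc: "((\<lambda>y. h y + c) has_derivative Dh x) (at x)"
    using h_deriv[OF x] by (auto intro!: derivative_eq_intros)
  have q: "((\<lambda>y. Dh y v / (h y + c)) has_derivative
      (\<lambda>w. - Dh x v * (inverse (h x + c) * Dh x w * inverse (h x + c)) + hess h x v w / (h x + c))) (at x)"
    using has_derivative_divide[OF g_deriv[OF x] hc] hx by simp
  have e: "(\<lambda>w. - Dh x v * (inverse (h x + c) * Dh x w * inverse (h x + c)) + hess h x v w / (h x + c))
     = (\<lambda>w. hess h x v w / (h x + c) - Dh x v * Dh x w / (h x + c)^2)"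
    by (rule ext) (simp add: divide_inverse power2_eq_square inverse_mult_distrib)
  have "((\<lambda>y. frechet_derivative ?F (at y) v) has_derivative
      (\<lambda>w. hess h x v w / (h x + c) - Dh x v * Dh x w / (h x + c)^2)) (at x)"
  proof (rule has_derivative_transform_within_open[of "\<lambda>y. Dh y v / (h y + c)" _ x UNIV "{y\<in>U. h y + c > 0}"])
    show "((\<lambda>y. Dh y v / (h y + c)) has_derivative
      (\<lambda>w. hess h x v w / (h x + c) - Dh x v * Dh x w / (h x + c)^2)) (at x)"
      using q unfolding e .
    show "\<And>y. y \<in> {y \<in> U. 0 < h y + c} \<Longrightarrow> Dh y v / (h y + c) = frechet_derivative ?F (at y) v"
    proof -
      fix y assume "y \<in> {y \<in> U. 0 < h y + c}"
      then have "y \<in> U" "0 < h y + c" by auto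
      from fun_cong[OF frechet_derivative_at[OF F_deriv[OF this]], of v]
      show "Dh y v / (h y + c) = frechet_derivative ?F (at y) v" .
    qed
  qed (use x hx S_open in auto)
  from fun_cong[OF frechet_derivative_at[OF this], of w] show ?thesis by (simp add: hess_def)
qed
end



lemma alg_B:
  fixes k H c Q a :: real
  assumes k: "k > 1" and c: "c \<le> 0" and D: "H + c > 0" and K: "k*H*Q + (k-1)*a^2 \<ge> 0"
  shows "a^2/(k*(H+c)^2) \<le> Q/(H+c) + a^2/(H+c)^2"
proof -
  define D where "D = H + c"
  have D0: "D > 0" using D D_def by simp
  have "k*H*Q \<le> k*D*Q" if "Q < 0"
  proof -
    have "H*Q \<le> D*Q" using that c D_def by (simp add: mult_right_mono_neg)
    then show ?thesis using k by (simp add: mult.assoc)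
  qed
  moreover have "0 \<le> k*D*Q" if "Q \<ge> 0" using that D0 k by simp
  ultimately have 1: "0 \<le> k*D*Q + (k-1)*a^2" using K by (cases "Q < 0") (auto, smt (verit) k zero_le_power2 mult_nonneg_nonneg)
  have "a^2/(k*D^2) \<le> Q/D + a^2/D^2 \<longleftrightarrow> a^2 \<le> k*D*Q + k*a^2"
    using D0 k by (simp add: field_simps power2_eq_square)
  with 1 show ?thesis unfolding D_def[symmetric] by (simp add: algebra_simps)
qed

lemma alg_B':
  fixes k H c Q a :: real
  assumes k: "k > 1" and c: "c \<le> 0" and D: "H + c > 0" and K: "k*H*Q + (k-1)*a^2 \<ge> 0"
  shows "\<bar>a\<bar>/(H+c) \<le> sqrt k * sqrt (Q/(H+c) + a^2/(H+c)^2)"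
proof -
  have "sqrt (a^2/(k*(H+c)^2)) \<le> sqrt (Q/(H+c) + a^2/(H+c)^2)"
    using alg_B[OF assms] real_sqrt_le_mono by blast
  moreover have "sqrt (a^2/(k*(H+c)^2)) = \<bar>a\<bar>/(sqrt k * (H+c))"
    using D k by (simp add: real_sqrt_divide real_sqrt_mult)
  ultimately have 1: "\<bar>a\<bar>/(sqrt k * (H+c)) \<le> sqrt (Q/(H+c) + a^2/(H+c)^2)" by simp
  have sk: "sqrt k > 0" using k by simp
  have "\<bar>a\<bar>/(H+c) = sqrt k * (\<bar>a\<bar>/(sqrt k * (H+c)))" using sk by simp
  also have "\<dots> \<le> sqrt k * sqrt (Q/(H+c) + a^2/(H+c)^2)" by (rule mult_left_mono) (use 1 sk in auto)
  finally show ?thesis .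
qed

lemma alg_A:
  fixes k H c Q a :: real
  assumes k: "k > 1" and c: "c < 0" and D: "H + c > 0" and K: "k*H*Q + (k-1)*a^2 \<ge> 0"
  shows "Q/H + a^2/H^2 \<le> Q/(H+c) + a^2/(H+c)^2"
proof -
  define D where "D = H + c"
  have D0: "D > 0" and H0: "H > 0" and DH: "D < H" using D c D_def by auto
  have "Q*H*D + a^2*(H+D) \<ge> 0"
  proof (cases "Q \<ge> 0")
    case True then show ?thesis using H0 D0 by simp
  next
    case False
    have "k*(Q*H) \<ge> -(k-1)*a^2" using K by (simp add: algebra_simps)
    moreover have "-(k-1)*a^2 \<ge> -k*a^2" using k by (simp add: algebra_simps)
    ultimately have "k*(Q*H) \<ge> k*(- (a^2))" by simp
    then have "Q*H \<ge> - (a^2)" using k mult_le_cancel_left_pos[of k "- (a^2)" "Q*H"] by simp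
    then have "Q*H*D \<ge> (- (a^2))*D" using mult_right_mono[OF _ less_imp_le[OF D0]] by blast
    moreover have "H * a^2 \<ge> 0" using H0 by simp
    ultimately show ?thesis by (simp add: algebra_simps)
  qed
  then have 2: "0 \<le> (H - D) * (Q*H*D + a^2*(H+D))" using DH by simp
  have "Q/H + a^2/H^2 \<le> Q/D + a^2/D^2 \<longleftrightarrow> Q*H*D^2 + a^2*D^2 \<le> Q*H^2*D + a^2*H^2"
    using D0 H0 by (simp add: field_simps power2_eq_square)
  moreover have "Q*H^2*D + a^2*H^2 - (Q*H*D^2 + a^2*D^2) = (H - D) * (Q*H*D + a^2*(H+D))"
    by (simp add: algebra_simps power2_eq_square)
  ultimately show ?thesis using 2 unfolding D_def[symmetric] by simp
qed

lemma alg_D: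
  fixes k H c Q a R :: real
  assumes k: "k > 1" and c: "c \<le> 0" and D: "H + c > 0" and K: "k*H*Q + (k-1)*a^2 \<ge> 0"
    and R: "H/(H+c) \<le> R"
  shows "Q/(H+c) + a^2/(H+c)^2 \<le> k * R^2 * (Q/H + a^2/H^2)"
proof -
  define r where "r = H/(H+c)"
  define p where "p = Q/H"
  define b where "b = a^2/H^2"
  have H0: "H > 0" using D c by simp
  have r1: "r \<ge> 1" using D c by (simp add: r_def field_simps)
  have rR: "r \<le> R" using R r_def by simp
  have r2: "r^2 \<le> R^2" using r1 rR by (simp add: power_mono)
  have b0: "b \<ge> 0" by (simp add: b_def)
  have pb: "k*p \<ge> -(k-1)*b"
  proof -
    have "-(k-1)*a^2 \<le> k*H*Q" using K by (simp add: algebra_simps)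
    then have "k*H*Q/H^2 \<ge> -(k-1)*a^2/H^2" by (rule divide_right_mono) simp
    then show ?thesis using H0 by (simp add: p_def b_def power2_eq_square field_simps)
  qed
  have g: "p + b \<ge> b/k"
  proof -
    have "k*(p+b) \<ge> b" using pb by (simp add: algebra_simps)
    then show ?thesis using k by (simp add: field_simps)
  qed
  have g0: "p + b \<ge> 0" using g b0 k by (smt (verit) divide_nonneg_pos)
  have lhs: "Q/(H+c) + a^2/(H+c)^2 = r*p + r^2*b"
    using H0 D by (simp add: r_def p_def b_def field_simps power2_eq_square)
  have "r*p + r^2*b \<le> k * R^2 * (p + b)"
  proof (cases "p \<ge> 0")
    case True
    have "r*p \<le> r^2*p" using r1 True by (simp add: power2_eq_square mult_right_mono)
    then have "r*p + r^2*b \<le> r^2*(p+b)" by (simp add: algebra_simps)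
    also have "\<dots> \<le> R^2*(p+b)" using r2 g0 by (simp add: mult_right_mono)
    also have "\<dots> \<le> k*R^2*(p+b)" using k g0 mult_right_mono[of 1 k "R^2*(p+b)"] by (simp add: mult.assoc)
    finally show ?thesis .
  next
    case False
    have "r*p \<le> 0" using False r1 by (simp add: mult_nonneg_nonpos)
    then have "r*p + r^2*b \<le> R^2*b" using r2 b0 by (smt (verit) mult_right_mono)
    also have "\<dots> \<le> R^2*(k*(p+b))"
    proof -
      have "b \<le> k*(p+b)" using g k by (simp add: field_simps)
      then show ?thesis by (simp add: mult_left_mono)
    qed
    finally show ?thesis by (simp add: algebra_simps)
  qed
  then show ?thesis using lhs by (simp add: p_def b_def)
qed


context hsetup begin

lemma Gval: assumes "x \<in> U" "h x + c > 0"
  shows "- hess (\<lambda>y. ln (h y + c)) x v v = (- hess h x v v)/(h x + c) + (Dh x v)^2/(h x + c)^2"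
  using hess_log[OF assms, of v v] by (simp add: power2_eq_square)

lemma PB: assumes "x \<in> U" "h x + c > 0" "c \<le> 0"
  shows "\<bar>Dh x v\<bar>/(h x + c) \<le> sqrt k * sqrt (- hess (\<lambda>y. ln (h y + c)) x v v)"
  unfolding Gval[OF assms(1,2)] using alg_B'[OF k_gt assms(3,2) K[OF assms(1)]] by simp

lemma Gnonneg: assumes "x \<in> U" "h x + c > 0" "c \<le> 0"
  shows "0 \<le> - hess (\<lambda>y. ln (h y + c)) x v v"
proof -
  have "0 \<le> (Dh x v)^2/(k*(h x + c)^2)" using k_gt by simp
  also have "\<dots> \<le> - hess (\<lambda>y. ln (h y + c)) x v v"
    unfolding Gval[OF assms(1,2)] using alg_B[OF k_gt assms(3,2) K[OF assms(1)]] by simp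
  finally show ?thesis .
qed

lemma PA: assumes "x \<in> U" "h x + c > 0" "c < 0"
  shows "sqrt (- hess (\<lambda>y. ln (h y + 0)) x v v) \<le> sqrt (- hess (\<lambda>y. ln (h y + c)) x v v)"
proof -
  have hx: "h x + 0 > 0" using h_pos assms by simp
  show ?thesis
    unfolding Gval[OF assms(1,2)] Gval[OF assms(1) hx]
    using alg_A[OF k_gt assms(3,2) K[OF assms(1)]] by simp
qed

lemma PD: assumes "x \<in> U" "h x + c \<ge> \<delta>" "\<delta> > 0" "c \<le> 0"
  shows "sqrt (- hess (\<lambda>y. ln (h y + c)) x v v) \<le> sqrt k * (1 - c/\<delta>) * sqrt (- hess (\<lambda>y. ln (h y + 0)) x v v)"
proof -
  have hc: "h x + c > 0" using assms by simp
  have hx: "h x + 0 > 0" using h_pos assms by simp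
  have R: "h x/(h x + c) \<le> 1 - c/\<delta>"
  proof -
    have "h x/(h x + c) = 1 + (-c)/(h x + c)" using hc by (simp add: field_simps)
    also have "(-c)/(h x + c) \<le> (-c)/\<delta>" by (rule frac_le) (use assms in auto)
    finally show ?thesis by simp
  qed
  have R0: "1 - c/\<delta> \<ge> 0" using assms by (simp add: divide_nonpos_pos)
  have "- hess (\<lambda>y. ln (h y + c)) x v v \<le> k * (1 - c/\<delta>)^2 * (- hess (\<lambda>y. ln (h y + 0)) x v v)"
    unfolding Gval[OF assms(1) hc] Gval[OF assms(1) hx]
    using alg_D[OF k_gt assms(4) hc K[OF assms(1)] R] by simp
  then have "sqrt (- hess (\<lambda>y. ln (h y + c)) x v v) \<le> sqrt (k * (1 - c/\<delta>)^2 * (- hess (\<lambda>y. ln (h y + 0)) x v v))"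
    using real_sqrt_le_mono by blast
  also have "\<dots> = sqrt k * (1 - c/\<delta>) * sqrt (- hess (\<lambda>y. ln (h y + 0)) x v v)"
    by (simp only: real_sqrt_mult real_sqrt_abs abs_of_nonneg[OF R0])
  finally show ?thesis .
qed

end

lemma C1_facts: fixes \<gamma> :: "real \<Rightarrow> 'a::real_normed_vector" assumes "\<gamma> C1_differentiable_on {0..1}"
  shows "continuous_on {0..1} \<gamma>" "continuous_on {0..1} (\<lambda>t. vector_derivative \<gamma> (at t))"
    "\<And>t::real. t \<in> {0..1} \<Longrightarrow> (\<gamma> has_vector_derivative vector_derivative \<gamma> (at t)) (at t)"
proof -
  have d: "\<forall>x\<in>{0..1}. \<gamma> differentiable at x" and c: "continuous_on {0..1} (\<lambda>t. vector_derivative \<gamma> (at t))"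
    using assms C1_differentiable_on_eq by blast+
  show "continuous_on {0..1} \<gamma>"
    using d by (intro continuous_at_imp_continuous_on) (auto intro: differentiable_imp_continuous_within)
  show "continuous_on {0..1} (\<lambda>t. vector_derivative \<gamma> (at t))" by (rule c)
  show "(\<gamma> has_vector_derivative vector_derivative \<gamma> (at t)) (at t)" if "t \<in> {0..1}" for t
    using d that vector_derivative_works by blast
qed

context hsetup begin

lemma curve_cont:
  fixes \<gamma> :: "real \<Rightarrow> 'a"
  assumes g: "\<gamma> C1_differentiable_on {0..1}" and im: "\<gamma> ` {0..1} \<subseteq> {y\<in>U. h y + c > 0}"
  shows "continuous_on {0..1} (\<lambda>t. - hess (\<lambda>y. ln (h y + c)) (\<gamma> t) (vector_derivative \<gamma> (at t)) (vector_derivative \<gamma> (at t)))"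
    "continuous_on {0..1} (\<lambda>t. Dh (\<gamma> t) (vector_derivative \<gamma> (at t)) / (h (\<gamma> t) + c))"
proof -
  let ?d = "\<lambda>t::real. vector_derivative \<gamma> (at t)"
  have imU: "\<gamma> ` {0..1} \<subseteq> U" using im by (auto simp: image_subset_iff)
  note gc = C1_facts[OF g]
  have ch: "continuous_on {0..1} (\<lambda>t. hess h (\<gamma> t) i j)" for i j
    by (rule continuous_on_compose2[OF C2(5) gc(1) imU])
  have cD: "continuous_on {0..1} (\<lambda>t. Dh (\<gamma> t) i)" for i
    by (rule continuous_on_compose2[OF C2(4) gc(1) imU])
  have chh: "continuous_on {0..1} (\<lambda>t. h (\<gamma> t))"
    by (rule continuous_on_compose2[OF C2(2) gc(1) imU])
  have nz: "\<And>t. t \<in> {0..1} \<Longrightarrow> h (\<gamma> t) + c \<noteq> 0" using im by force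
  have E: "continuous_on {0..1} (\<lambda>t. (- (\<Sum>i\<in>Basis. \<Sum>j\<in>Basis. (?d t \<bullet> i) * (?d t \<bullet> j) * hess h (\<gamma> t) i j))/(h (\<gamma> t) + c)
        + (\<Sum>i\<in>Basis. (?d t \<bullet> i) * Dh (\<gamma> t) i)^2/(h (\<gamma> t) + c)^2)"
    using nz by (intro continuous_intros ch cD chh gc(2)) auto
  show "continuous_on {0..1} (\<lambda>t. - hess (\<lambda>y. ln (h y + c)) (\<gamma> t) (?d t) (?d t))"
  proof (rule continuous_on_eq[OF E])
    fix t :: real assume t: "t \<in> {0..1}"
    then have "\<gamma> t \<in> U" "h (\<gamma> t) + c > 0" using im by (auto simp: image_subset_iff)
    then show "(- (\<Sum>i\<in>Basis. \<Sum>j\<in>Basis. (?d t \<bullet> i) * (?d t \<bullet> j) * hess h (\<gamma> t) i j))/(h (\<gamma> t) + c)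
        + (\<Sum>i\<in>Basis. (?d t \<bullet> i) * Dh (\<gamma> t) i)^2/(h (\<gamma> t) + c)^2 = - hess (\<lambda>y. ln (h y + c)) (\<gamma> t) (?d t) (?d t)"
      by (simp add: Gval hess_expand[symmetric] Dh_expand[symmetric])
  qed
  have E2: "continuous_on {0..1} (\<lambda>t. (\<Sum>i\<in>Basis. (?d t \<bullet> i) * Dh (\<gamma> t) i)/(h (\<gamma> t) + c))"
    using nz by (intro continuous_intros cD chh gc(2)) auto
  show "continuous_on {0..1} (\<lambda>t. Dh (\<gamma> t) (?d t) / (h (\<gamma> t) + c))"
  proof (rule continuous_on_eq[OF E2])
    fix t :: real assume t: "t \<in> {0..1}"
    then have "\<gamma> t \<in> U" using im by (auto simp: image_subset_iff)
    then show "(\<Sum>i\<in>Basis. (?d t \<bullet> i) * Dh (\<gamma> t) i)/(h (\<gamma> t) + c) = Dh (\<gamma> t) (?d t) / (h (\<gamma> t) + c)"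
      by (simp add: Dh_expand[symmetric])
  qed
qed

end

context hsetup begin

lemma integrable_G:
  fixes \<gamma> :: "real \<Rightarrow> 'a"
  assumes g: "\<gamma> C1_differentiable_on {0..1}" and im: "\<gamma> ` {0..1} \<subseteq> {y\<in>U. h y + c > 0}"
    and S: "S \<subseteq> {0..1}" "S = {a..b}"
  shows "(\<lambda>t. sqrt (- hess (\<lambda>y. ln (h y + c)) (\<gamma> t) (vector_derivative \<gamma> (at t)) (vector_derivative \<gamma> (at t)))) integrable_on S"
proof -
  have "continuous_on {0..1} (\<lambda>t. sqrt (- hess (\<lambda>y. ln (h y + c)) (\<gamma> t) (vector_derivative \<gamma> (at t)) (vector_derivative \<gamma> (at t))))"
    by (intro continuous_intros curve_cont(1)[OF g im])
  then have "continuous_on S (\<lambda>t. sqrt (- hess (\<lambda>y. ln (h y + c)) (\<gamma> t) (vector_derivative \<gamma> (at t)) (vector_derivative \<gamma> (at t))))"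
    using S(1) continuous_on_subset by blast
  then show ?thesis unfolding S(2) by (rule integrable_continuous_interval)
qed

lemma len_nonneg:
  fixes \<gamma> :: "real \<Rightarrow> 'a"
  assumes g: "\<gamma> C1_differentiable_on {0..1}" and im: "\<gamma> ` {0..1} \<subseteq> {y\<in>U. h y + c > 0}"
    and c: "c \<le> 0"
  shows "0 \<le> curve_length (\<lambda>x v w. - hess (\<lambda>y. ln (h y + c)) x v w) \<gamma>"
  unfolding curve_length_def
proof (rule integral_nonneg)
  show "(\<lambda>t. sqrt (- hess (\<lambda>y. ln (h y + c)) (\<gamma> t) (vector_derivative \<gamma> (at t)) (vector_derivative \<gamma> (at t)))) integrable_on {0..1}"
    by (rule integrable_G[OF g im _ refl]) simp
  fix t :: real assume "t \<in> {0..1}"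
  then have "\<gamma> t \<in> U" "h (\<gamma> t) + c > 0" using im by (auto simp: image_subset_iff)
  then show "0 \<le> sqrt (- hess (\<lambda>y. ln (h y + c)) (\<gamma> t) (vector_derivative \<gamma> (at t)) (vector_derivative \<gamma> (at t)))"
    using Gnonneg c by simp
qed

lemma len_ln:
  fixes \<gamma> :: "real \<Rightarrow> 'a"
  assumes g: "\<gamma> C1_differentiable_on {0..1}" and im: "\<gamma> ` {0..1} \<subseteq> {y\<in>U. h y + c > 0}"
    and c: "c \<le> 0" and t: "t \<in> {0..1}"
  shows "\<bar>ln (h (\<gamma> t) + c) - ln (h (\<gamma> 0) + c)\<bar> \<le> sqrt k * curve_length (\<lambda>x v w. - hess (\<lambda>y. ln (h y + c)) x v w) \<gamma>"
proof -
  let ?d = "\<lambda>t::real. vector_derivative \<gamma> (at t)"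
  let ?F = "\<lambda>s. ln (h (\<gamma> s) + c)"
  let ?f = "\<lambda>s. Dh (\<gamma> s) (?d s) / (h (\<gamma> s) + c)"
  let ?I = "\<lambda>s. sqrt (- hess (\<lambda>y. ln (h y + c)) (\<gamma> s) (?d s) (?d s))"
  have imp: "\<gamma> s \<in> U" "h (\<gamma> s) + c > 0" if "s \<in> {0..1}" for s using im that by (auto simp: image_subset_iff)
  have der: "(?F has_vector_derivative ?f s) (at s within {0..t})" if s: "s \<in> {0..t}" for s
  proof -
    have s1: "s \<in> {0..1}" using s t by auto
    have "(\<gamma> has_derivative (\<lambda>r. r *\<^sub>R ?d s)) (at s)"
      using C1_facts(3)[OF g s1] by (simp add: has_vector_derivative_def)
    from has_derivative_compose[OF this F_deriv[OF imp[OF s1]]]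
    have "(?F has_derivative (\<lambda>r. Dh (\<gamma> s) (r *\<^sub>R ?d s) / (h (\<gamma> s) + c))) (at s)" by simp
    moreover have "(\<lambda>r. Dh (\<gamma> s) (r *\<^sub>R ?d s) / (h (\<gamma> s) + c)) = (\<lambda>r. r *\<^sub>R ?f s)"
      using linear_scale[OF Dh_lin[OF imp(1)[OF s1]]] by (auto simp: fun_eq_iff)
    ultimately have "(?F has_vector_derivative ?f s) (at s)" by (simp add: has_vector_derivative_def)
    then show ?thesis by (rule has_vector_derivative_at_within)
  qed
  have t0: "0 \<le> t" using t by simp
  have ftc: "(?f has_integral (?F t - ?F 0)) {0..t}"
    by (rule fundamental_theorem_of_calculus[OF t0 der])
  have sub: "{0..t} \<subseteq> {0..1}" using t by auto
  have Iint: "?I integrable_on {0..t}" by (rule integrable_G[OF g im sub refl])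
  have Iint1: "?I integrable_on {0..1}" by (rule integrable_G[OF g im _ refl]) simp
  have "norm (integral {0..t} ?f) \<le> integral {0..t} (\<lambda>s. sqrt k * ?I s)"
  proof (rule integral_norm_bound_integral)
    show "?f integrable_on {0..t}" using ftc by blast
    show "(\<lambda>s. sqrt k * ?I s) integrable_on {0..t}" using integrable_on_cmult_left[OF Iint, of "sqrt k"] by simp
    fix s assume "s \<in> {0..t}"
    then have s1: "s \<in> {0..1}" using sub by auto
    show "norm (?f s) \<le> sqrt k * ?I s"
      using PB[OF imp[OF s1] c, of "?d s"] imp(2)[OF s1] by (simp add: abs_div)
  qed
  also have "\<dots> \<le> integral {0..1} (\<lambda>s. sqrt k * ?I s)"
  proof (rule integral_subset_le[OF sub])
    show "(\<lambda>s. sqrt k * ?I s) integrable_on {0..t}" using integrable_on_cmult_left[OF Iint, of "sqrt k"] by simp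
    show "(\<lambda>s. sqrt k * ?I s) integrable_on {0..1}" using integrable_on_cmult_left[OF Iint1, of "sqrt k"] by simp
    show "\<forall>x\<in>{0..1}. 0 \<le> sqrt k * ?I x" using k_gt Gnonneg imp c by simp
  qed
  also have "\<dots> = sqrt k * curve_length (\<lambda>x v w. - hess (\<lambda>y. ln (h y + c)) x v w) \<gamma>"
    unfolding curve_length_def by simp
  finally show ?thesis using integral_unique[OF ftc] by simp
qed

lemma len_A:
  fixes \<gamma> :: "real \<Rightarrow> 'a"
  assumes g: "\<gamma> C1_differentiable_on {0..1}" and im: "\<gamma> ` {0..1} \<subseteq> {y\<in>U. h y + c > 0}"
    and c: "c < 0"
  shows "curve_length (\<lambda>x v w. - hess (\<lambda>y. ln (h y + 0)) x v w) \<gamma> \<le> curve_length (\<lambda>x v w. - hess (\<lambda>y. ln (h y + c)) x v w) \<gamma>"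
proof -
  have im0: "\<gamma> ` {0..1} \<subseteq> {y\<in>U. h y + 0 > 0}" using im h_pos by auto
  show ?thesis unfolding curve_length_def
  proof (rule integral_le)
    show "(\<lambda>t. sqrt (- hess (\<lambda>y. ln (h y + 0)) (\<gamma> t) (vector_derivative \<gamma> (at t)) (vector_derivative \<gamma> (at t)))) integrable_on {0..1}"
      by (rule integrable_G[OF g im0 _ refl]) simp
    show "(\<lambda>t. sqrt (- hess (\<lambda>y. ln (h y + c)) (\<gamma> t) (vector_derivative \<gamma> (at t)) (vector_derivative \<gamma> (at t)))) integrable_on {0..1}"
      by (rule integrable_G[OF g im _ refl]) simp
    fix t :: real assume "t \<in> {0..1}"
    then have "\<gamma> t \<in> U" "h (\<gamma> t) + c > 0" using im by (auto simp: image_subset_iff)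
    then show "sqrt (- hess (\<lambda>y. ln (h y + 0)) (\<gamma> t) (vector_derivative \<gamma> (at t)) (vector_derivative \<gamma> (at t)))
      \<le> sqrt (- hess (\<lambda>y. ln (h y + c)) (\<gamma> t) (vector_derivative \<gamma> (at t)) (vector_derivative \<gamma> (at t)))"
      using PA c by blast
  qed
qed

lemma len_D:
  fixes \<gamma> :: "real \<Rightarrow> 'a"
  assumes g: "\<gamma> C1_differentiable_on {0..1}" and im: "\<gamma> ` {0..1} \<subseteq> {y\<in>U. h y + c \<ge> \<delta>}"
    and c: "c \<le> 0" and d: "\<delta> > 0"
  shows "curve_length (\<lambda>x v w. - hess (\<lambda>y. ln (h y + c)) x v w) \<gamma> \<le> sqrt k * (1 - c/\<delta>) * curve_length (\<lambda>x v w. - hess (\<lambda>y. ln (h y + 0)) x v w) \<gamma>"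
proof -
  have im0: "\<gamma> ` {0..1} \<subseteq> {y\<in>U. h y + 0 > 0}" using im h_pos by auto
  have imc: "\<gamma> ` {0..1} \<subseteq> {y\<in>U. h y + c > 0}" using im d by force
  have "integral {0..1} (\<lambda>t. sqrt (- hess (\<lambda>y. ln (h y + c)) (\<gamma> t) (vector_derivative \<gamma> (at t)) (vector_derivative \<gamma> (at t))))
    \<le> integral {0..1} (\<lambda>t. sqrt k * (1 - c/\<delta>) * sqrt (- hess (\<lambda>y. ln (h y + 0)) (\<gamma> t) (vector_derivative \<gamma> (at t)) (vector_derivative \<gamma> (at t))))"
  proof (rule integral_le)
    show "(\<lambda>t. sqrt k * (1 - c/\<delta>) * sqrt (- hess (\<lambda>y. ln (h y + 0)) (\<gamma> t) (vector_derivative \<gamma> (at t)) (vector_derivative \<gamma> (at t)))) integrable_on {0..1}"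
    proof -
      have "(\<lambda>t. sqrt (- hess (\<lambda>y. ln (h y + 0)) (\<gamma> t) (vector_derivative \<gamma> (at t)) (vector_derivative \<gamma> (at t)))) integrable_on {0..1}"
        by (rule integrable_G[OF g im0 _ refl]) simp
      from integrable_on_cmult_left[OF this, of "sqrt k * (1 - c/\<delta>)"] show ?thesis by simp
    qed
    show "(\<lambda>t. sqrt (- hess (\<lambda>y. ln (h y + c)) (\<gamma> t) (vector_derivative \<gamma> (at t)) (vector_derivative \<gamma> (at t)))) integrable_on {0..1}"
      by (rule integrable_G[OF g imc _ refl]) simp
    fix t :: real assume "t \<in> {0..1}"
    then have "\<gamma> t \<in> U" "h (\<gamma> t) + c \<ge> \<delta>" using im by (auto simp: image_subset_iff)
    then show "sqrt (- hess (\<lambda>y. ln (h y + c)) (\<gamma> t) (vector_derivative \<gamma> (at t)) (vector_derivative \<gamma> (at t)))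
      \<le> sqrt k * (1 - c/\<delta>) * sqrt (- hess (\<lambda>y. ln (h y + 0)) (\<gamma> t) (vector_derivative \<gamma> (at t)) (vector_derivative \<gamma> (at t)))"
      using PD c d by blast
  qed
  then show ?thesis unfolding curve_length_def by simp
qed

end



lemma dist_curve:
  assumes "riem_dist S G x y < ereal e"
  obtains \<gamma> where "\<gamma> C1_differentiable_on {0..1}" "\<gamma> ` {0..1} \<subseteq> S" "\<gamma> 0 = x" "\<gamma> 1 = y"
    "curve_length G \<gamma> < e"
  using assms unfolding riem_dist_def Inf_less_iff by auto

lemma dist_le_curve:
  assumes "\<gamma> C1_differentiable_on {0..1}" "\<gamma> ` {0..1} \<subseteq> S" "\<gamma> 0 = x" "\<gamma> 1 = y"
  shows "riem_dist S G x y \<le> ereal (curve_length G \<gamma>)"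
  unfolding riem_dist_def using assms by (intro Inf_lower) auto

context hsetup begin

lemma dist_nonneg: assumes "c \<le> 0"
  shows "0 \<le> riem_dist {x\<in>U. h x + c > 0} (\<lambda>x v w. - hess (\<lambda>y. ln (h y + c)) x v w) p q"
  unfolding riem_dist_def
  by (rule Inf_greatest) (use len_nonneg assms in auto)

lemma dist_mono: assumes c: "c < 0"
  shows "riem_dist U (\<lambda>x v w. - hess (\<lambda>y. ln (h y + 0)) x v w) p q
     \<le> riem_dist {x\<in>U. h x + c > 0} (\<lambda>x v w. - hess (\<lambda>y. ln (h y + c)) x v w) p q"
  unfolding riem_dist_def
proof (rule Inf_mono)
  fix b assume "b \<in> {ereal (curve_length (\<lambda>x v w. - hess (\<lambda>y. ln (h y + c)) x v w) \<gamma>) |\<gamma>.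
             \<gamma> C1_differentiable_on {0..1} \<and> \<gamma> ` {0..1} \<subseteq> {x \<in> U. 0 < h x + c} \<and> \<gamma> 0 = p \<and> \<gamma> 1 = q}"
  then obtain \<gamma> where g: "\<gamma> C1_differentiable_on {0..1}" and im: "\<gamma> ` {0..1} \<subseteq> {x \<in> U. 0 < h x + c}"
    and e: "\<gamma> 0 = p" "\<gamma> 1 = q" and b: "b = ereal (curve_length (\<lambda>x v w. - hess (\<lambda>y. ln (h y + c)) x v w) \<gamma>)"
    by blast
  show "\<exists>a\<in>{ereal (curve_length (\<lambda>x v w. - hess (\<lambda>y. ln (h y + 0)) x v w) \<gamma>) |\<gamma>.
             \<gamma> C1_differentiable_on {0..1} \<and> \<gamma> ` {0..1} \<subseteq> U \<and> \<gamma> 0 = p \<and> \<gamma> 1 = q}. a \<le> b"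
    using g im e len_A[OF g im c] unfolding b by force
qed

lemma stay:
  fixes \<gamma> :: "real \<Rightarrow> 'a"
  assumes g: "\<gamma> C1_differentiable_on {0..1}" and im: "\<gamma> ` {0..1} \<subseteq> U"
    and x0: "h (\<gamma> 0) \<ge> A" and A0: "A > 0" and B: "B > 0" and L: "sqrt k * curve_length (\<lambda>x v w. - hess (\<lambda>y. ln (h y + 0)) x v w) \<gamma> < ln (A/B)"
    and t: "t \<in> {0..1}"
  shows "h (\<gamma> t) \<ge> B"
proof -
  have im0: "\<gamma> ` {0..1} \<subseteq> {y\<in>U. h y + 0 > 0}" using im h_pos by auto
  have "\<bar>ln (h (\<gamma> t) + 0) - ln (h (\<gamma> 0) + 0)\<bar> \<le> sqrt k * curve_length (\<lambda>x v w. - hess (\<lambda>y. ln (h y + 0)) x v w) \<gamma>"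
    by (rule len_ln[OF g im0 _ t]) simp
  with L have 1: "ln (h (\<gamma> 0)) - ln (A/B) < ln (h (\<gamma> t))" by simp
  have h0: "h (\<gamma> 0) > 0" "h (\<gamma> t) > 0" using im t h_pos by (auto simp: image_subset_iff)
  have "ln A \<le> ln (h (\<gamma> 0))" using x0 A0 by simp
  then have "ln B < ln (h (\<gamma> t))" using 1 A0 B by (simp add: ln_div)
  then show ?thesis using B h0 by simp
qed

end

context hsetup begin

lemma main: assumes c: "c < 0" and gc: "riem_complete U (\<lambda>x v w. - hess (\<lambda>y. ln (h y + 0)) x v w)"
  shows "riem_complete {x\<in>U. h x + c > 0} (\<lambda>x v w. - hess (\<lambda>y. ln (h y + c)) x v w)"
  unfolding riem_complete_def
proof (intro allI impI)
  fix X :: "nat \<Rightarrow> 'a"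
  let ?S = "{x\<in>U. h x + c > 0}"
  let ?Gc = "\<lambda>x v w. - hess (\<lambda>y. ln (h y + c)) x v w"
  let ?G0 = "\<lambda>x v w. - hess (\<lambda>y. ln (h y + 0)) x v w"
  let ?dc = "riem_dist ?S ?Gc"
  let ?d0 = "riem_dist U ?G0"
  assume "(\<forall>m. X m \<in> ?S) \<and> (\<forall>e>0. \<exists>N. \<forall>m\<ge>N. \<forall>p\<ge>N. ?dc (X m) (X p) < ereal e)"
  then have XS: "\<And>m. X m \<in> ?S" and cau: "\<And>e. e>0 \<Longrightarrow> \<exists>N. \<forall>m\<ge>N. \<forall>p\<ge>N. ?dc (X m) (X p) < ereal e"
    by auto
  have XU: "\<And>m. X m \<in> U" using XS by auto
  have cau0: "\<forall>e>0. \<exists>N. \<forall>m\<ge>N. \<forall>p\<ge>N. ?d0 (X m) (X p) < ereal e"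
    using cau dist_mono[OF c] le_less_trans by meson
  obtain y where yU: "y \<in> U" and lim: "(\<lambda>m. ?d0 (X m) y) \<longlonglongrightarrow> 0"
    using gc cau0 XU unfolding riem_complete_def by blast
  obtain N where N: "\<forall>m\<ge>N. \<forall>p\<ge>N. ?dc (X m) (X p) < ereal 1" using cau[of 1] by auto
  have sk: "sqrt k > 0" using k_gt by simp
  define \<delta> where "\<delta> = exp (ln (h (X N) + c) - sqrt k)"
  have \<delta>0: "\<delta> > 0" unfolding \<delta>_def by simp
  have hX: "h (X m) + c \<ge> \<delta>" if m: "m \<ge> N" for m
  proof -
    have "?dc (X N) (X m) < ereal 1" using N m by auto
    then obtain \<gamma> where g: "\<gamma> C1_differentiable_on {0..1}" and im: "\<gamma> ` {0..1} \<subseteq> ?S"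
      and e: "\<gamma> 0 = X N" "\<gamma> 1 = X m" and L: "curve_length ?Gc \<gamma> < 1"
      by (rule dist_curve)
    have "\<bar>ln (h (\<gamma> 1) + c) - ln (h (\<gamma> 0) + c)\<bar> \<le> sqrt k * curve_length ?Gc \<gamma>"
      by (rule len_ln[OF g im]) (use c in auto)
    also have "\<dots> < sqrt k" using L sk by simp
    finally have "ln (h (X N) + c) - sqrt k \<le> ln (h (X m) + c)" using e by simp
    then have "\<delta> \<le> exp (ln (h (X m) + c))" unfolding \<delta>_def by simp
    also have "\<dots> = h (X m) + c" using XS[of m] by simp
    finally show ?thesis .
  qed
  define \<delta>' where "\<delta>' = \<delta>/2"
  have \<delta>'0: "\<delta>' > 0" using \<delta>0 \<delta>'_def by simp
  define \<epsilon> where "\<epsilon> = ln ((\<delta> - c)/(\<delta>' - c)) / sqrt k"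
  have q1: "(\<delta> - c)/(\<delta>' - c) > 1" using \<delta>0 c \<delta>'_def by (simp add: field_simps)
  have \<epsilon>0: "\<epsilon> > 0" unfolding \<epsilon>_def using q1 sk by simp
  define K where "K = sqrt k * (1 - c/\<delta>')"
  have K0: "K > 0" unfolding K_def using sk c \<delta>'0 by (simp add: divide_neg_pos)
  have good: "\<gamma> ` {0..1} \<subseteq> {y\<in>U. h y + c \<ge> \<delta>'} \<and> curve_length ?Gc \<gamma> \<le> K * curve_length ?G0 \<gamma>"
    if m: "m \<ge> N" and g: "\<gamma> C1_differentiable_on {0..1}" and im: "\<gamma> ` {0..1} \<subseteq> U"
      and e: "\<gamma> 0 = X m" and L: "curve_length ?G0 \<gamma> < \<epsilon>" for m \<gamma>
  proof -
    have "sqrt k * curve_length ?G0 \<gamma> < sqrt k * \<epsilon>" using L sk by simp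
    also have "\<dots> = ln ((\<delta> - c)/(\<delta>' - c))" unfolding \<epsilon>_def using sk by simp
    finally have L': "sqrt k * curve_length ?G0 \<gamma> < ln ((\<delta> - c)/(\<delta>' - c))" .
    have "h (\<gamma> t) \<ge> \<delta>' - c" if t: "t \<in> {0..1}" for t
      by (rule stay[OF g im _ _ _ L' t]) (use hX[OF m] e \<delta>0 \<delta>'0 c in auto)
    then have im': "\<gamma> ` {0..1} \<subseteq> {y\<in>U. h y + c \<ge> \<delta>'}" using im by (force simp: image_subset_iff)
    show ?thesis using im' len_D[OF g im' less_imp_le[OF c] \<delta>'0] unfolding K_def by simp
  qed
  have key: "y \<in> ?S \<and> ?dc (X m) y < ereal (K * \<eta>)"
    if m: "m \<ge> N" and d: "?d0 (X m) y < ereal \<eta>" and \<eta>: "\<eta> \<le> \<epsilon>" for m \<eta>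
  proof -
    obtain \<gamma> where g: "\<gamma> C1_differentiable_on {0..1}" and im: "\<gamma> ` {0..1} \<subseteq> U"
      and e: "\<gamma> 0 = X m" "\<gamma> 1 = y" and L: "curve_length ?G0 \<gamma> < \<eta>"
      using d by (rule dist_curve)
    have L\<epsilon>: "curve_length ?G0 \<gamma> < \<epsilon>" using L \<eta> by simp
    from good[OF m g im e(1) L\<epsilon>]
    have im': "\<gamma> ` {0..1} \<subseteq> {y\<in>U. h y + c \<ge> \<delta>'}" and Lc: "curve_length ?Gc \<gamma> \<le> K * curve_length ?G0 \<gamma>"
      by auto
    have imS: "\<gamma> ` {0..1} \<subseteq> ?S" using im' \<delta>'0 by force
    have "y \<in> ?S" using imS e(2) by force
    moreover have "?dc (X m) y \<le> ereal (curve_length ?Gc \<gamma>)"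
      using dist_le_curve[OF g imS e] .
    moreover have "curve_length ?Gc \<gamma> < K * \<eta>" using Lc L K0 by (smt (verit) mult_strict_left_mono)
    then have "ereal (curve_length ?Gc \<gamma>) < ereal (K * \<eta>)" by simp
    ultimately show ?thesis using le_less_trans by blast
  qed
  have ev: "eventually (\<lambda>m. m \<ge> N \<and> ?d0 (X m) y < ereal \<eta>) sequentially" if "\<eta> > 0" for \<eta>
  proof -
    have "eventually (\<lambda>m. ?d0 (X m) y < ereal \<eta>) sequentially"
      using order_tendstoD(2)[OF lim] that by simp
    from eventually_conj[OF eventually_ge_at_top[of N] this] show ?thesis .
  qed
  obtain m0 where "m0 \<ge> N" "?d0 (X m0) y < ereal \<epsilon>"
    using eventually_happens'[OF _ ev[OF \<epsilon>0]] by auto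
  then have yS: "y \<in> ?S" using key by blast
  show "\<exists>y\<in>?S. (\<lambda>m. ?dc (X m) y) \<longlonglongrightarrow> 0"
  proof (intro bexI[OF _ yS] order_tendstoI)
    fix a :: ereal assume "a < 0"
    then show "eventually (\<lambda>m. a < ?dc (X m) y) sequentially"
      using dist_nonneg[OF less_imp_le[OF c]] by (auto intro: always_eventually less_le_trans)
  next
    fix a :: ereal assume a0: "0 < a"
    obtain z where z: "0 < z" "z < a" using dense[OF a0] by blast
    then obtain r where r: "z = ereal r" by (cases z) auto
    have r0: "r > 0" using z r by simp
    define \<eta> where "\<eta> = min \<epsilon> (r / K)"
    have \<eta>0: "\<eta> > 0" unfolding \<eta>_def using \<epsilon>0 r0 K0 by simp
    have Kr: "K * \<eta> \<le> r" unfolding \<eta>_def using K0 by (simp add: min_def field_simps)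
    show "eventually (\<lambda>m. ?dc (X m) y < a) sequentially"
      using ev[OF \<eta>0]
    proof (rule eventually_mono)
      fix m assume "m \<ge> N \<and> ?d0 (X m) y < ereal \<eta>"
      then have "?dc (X m) y < ereal (K * \<eta>)" using key[of m \<eta>] \<eta>_def by auto
      also have "\<dots> \<le> ereal r" using Kr by simp
      also have "\<dots> < a" using z r by simp
      finally show "?dc (X m) y < a" .
    qed
  qed
qed

end

theorem mainTheorem17:
  fixes U :: "(real ^ 'n) set" and h :: "real ^ 'n \<Rightarrow> real" and k c :: real
  assumes U_open: "open U" and U_conn: "connected U"
    and U_cone: "\<And>t x. t > 0 \<Longrightarrow> x \<in> U \<Longrightarrow> t *\<^sub>R x \<in> U"
    and h_smooth: "smooth_on h U"
    and h_pos: "\<And>x. x \<in> U \<Longrightarrow> h x > 0"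
    and k_gt: "k > 1"
    and h_hom: "\<And>t x. t > 0 \<Longrightarrow> x \<in> U \<Longrightarrow> h (t *\<^sub>R x) = t powr k * h x"
    and h_def: "\<And>x v. x \<in> U \<Longrightarrow> h x = 1 \<Longrightarrow> v \<noteq> 0 \<Longrightarrow>
                   frechet_derivative h (at x) v = 0 \<Longrightarrow> - hess h x v v > 0"
    and g_complete: "riem_complete U (\<lambda>x v w. - hess (\<lambda>y. ln (h y)) x v w)"
    and c_neg: "c < 0"
  shows "riem_complete {x \<in> U. h x + c > 0} (\<lambda>x v w. - hess (\<lambda>y. ln (h y + c)) x v w)"
proof -
  interpret hsetup U h k
    using U_open U_cone h_smooth h_pos k_gt h_hom h_def by unfold_locales
  have "riem_complete U (\<lambda>x v w. - hess (\<lambda>y. ln (h y + 0)) x v w)" using g_complete by simp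
  from main[OF c_neg this] show ?thesis .
qed

end
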